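(* Let $A$ be a cyclic Leibniz algebra generated by $a$, with notation as in the context. Then $A$ has a unique maximal ideal, namely $M_1=\{b\in A: t(L_a)(b)=0\}$, where $t(x)=p(x)/p_1(x)$.
   Context: A (left) Leibniz algebra is an algebra satisfying $x(yz)=(xy)z+y(xz)$ for all $x,y,z$; all algebras are finite-dimensional over a field $F$. $A$ is a cyclic Leibniz algebra generated by $a$: $A$ is generated as an algebra by the single element $a$, and with $a^1=a$, $a^{k+1}=aa^k$, the elements $a,a^2,\dots,a^n$ form a basis of $A$. Write $aa^n=\alpha_2a^2+\cdots+\alpha_na^n$. $L_a:A\to A$ is $b\mapsto ab$, with characteristic (and minimal) polynomial $p(x)=x^n-\alpha_nx^{n-1}-\cdots-\alpha_2x=p_1(x)^{n_1}\cdots p_s(x)^{n_s}$, the $p_j$ distinct monic irreducibles over $F$, $p_1(x)=x$. An ideal is a subspace $I$ with $AI\subseteq I$ and $IA\subseteq I$; a maximal ideal is a proper ideal not properly contained in any proper ideal. *)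

theory Defs
  imports Main "HOL-Computational_Algebra.Polynomial"
begin

definition leibniz_algebra ::
  "('a::field \<Rightarrow> 'v::ab_group_add \<Rightarrow> 'v) \<Rightarrow> ('v \<Rightarrow> 'v \<Rightarrow> 'v) \<Rightarrow> bool" where
  "leibniz_algebra scale m \<longleftrightarrow>
     vector_space scale \<and>
     (\<forall>x. Vector_Spaces.linear scale scale (m x)) \<and>
     (\<forall>y. Vector_Spaces.linear scale scale (\<lambda>x. m x y)) \<and>
     (\<forall>x y z. m x (m y z) = m (m x y) z + m y (m x z))"

text \<open>Left powers: lpow m a 1 = a, lpow m a (k+1) = m a (lpow m a k).\<close>
definition lpow :: "('v \<Rightarrow> 'v \<Rightarrow> 'v) \<Rightarrow> 'v \<Rightarrow> nat \<Rightarrow> 'v" where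
  "lpow m a k = (m a ^^ (k - 1)) a"

definition generated_by ::
  "('a::field \<Rightarrow> 'v::ab_group_add \<Rightarrow> 'v) \<Rightarrow> ('v \<Rightarrow> 'v \<Rightarrow> 'v) \<Rightarrow> 'v \<Rightarrow> bool" where
  "generated_by scale m a \<longleftrightarrow>
     (\<forall>S. module.subspace scale S \<and> (\<forall>x\<in>S. \<forall>y\<in>S. m x y \<in> S) \<and> a \<in> S \<longrightarrow> S = UNIV)"

definition alg_ideal ::
  "('a::field \<Rightarrow> 'v::ab_group_add \<Rightarrow> 'v) \<Rightarrow> ('v \<Rightarrow> 'v \<Rightarrow> 'v) \<Rightarrow> 'v set \<Rightarrow> bool" where
  "alg_ideal scale m I \<longleftrightarrow>
     module.subspace scale I \<and> (\<forall>x. \<forall>y\<in>I. m x y \<in> I \<and> m y x \<in> I)"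

definition maximal_ideal ::
  "('a::field \<Rightarrow> 'v::ab_group_add \<Rightarrow> 'v) \<Rightarrow> ('v \<Rightarrow> 'v \<Rightarrow> 'v) \<Rightarrow> 'v set \<Rightarrow> bool" where
  "maximal_ideal scale m I \<longleftrightarrow>
     alg_ideal scale m I \<and> I \<noteq> UNIV \<and>
     (\<forall>J. alg_ideal scale m J \<and> I \<subseteq> J \<and> J \<noteq> UNIV \<longrightarrow> J = I)"

definition poly_op ::
  "('a::field \<Rightarrow> 'v::ab_group_add \<Rightarrow> 'v) \<Rightarrow> 'a poly \<Rightarrow> ('v \<Rightarrow> 'v) \<Rightarrow> 'v \<Rightarrow> 'v" where
  "poly_op scale q f b = (\<Sum>i\<le>degree q. scale (coeff q i) ((f ^^ i) b))"

definition char_poly_cyc :: "nat \<Rightarrow> (nat \<Rightarrow> 'a::field) \<Rightarrow> 'a poly" where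
  "char_poly_cyc n \<alpha> = monom 1 n - (\<Sum>k=2..n. monom (\<alpha> k) (k - 1))"

end

theory Submission imports Defs begin

lemma poly_op_bound:
  assumes "vector_space scale" "degree q \<le> N"
  shows "poly_op scale q f b = (\<Sum>i\<le>N. scale (coeff q i) ((f ^^ i) b))"
proof -
  interpret vector_space scale by fact
  show ?thesis unfolding poly_op_def
    by (rule sum.mono_neutral_left) (use assms(2) in \<open>auto simp: coeff_eq_0\<close>)
qed

lemma poly_op_add:
  assumes "vector_space scale"
  shows "poly_op scale (p + q) f b = poly_op scale p f b + poly_op scale q f b"
proof -
  interpret vector_space scale by fact
  let ?N = "max (degree p) (degree q)"
  have "degree (p+q) \<le> ?N" by (rule degree_add_le) auto
  then show ?thesis
    using poly_op_bound[OF assms, of "p+q" ?N] poly_op_bound[OF assms, of p ?N] poly_op_bound[OF assms, of q ?N]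
    by (simp add: scale_left_distrib sum.distrib)
qed

lemma poly_op_diff:
  assumes "vector_space scale"
  shows "poly_op scale (p - q) f b = poly_op scale p f b - poly_op scale q f b"
proof -
  interpret vector_space scale by fact
  let ?N = "max (degree p) (degree q)"
  have "degree (p-q) \<le> ?N" by (rule degree_diff_le) auto
  then show ?thesis
    using poly_op_bound[OF assms, of "p-q" ?N] poly_op_bound[OF assms, of p ?N] poly_op_bound[OF assms, of q ?N]
    by (simp add: scale_left_diff_distrib sum_subtractf)
qed

lemma poly_op_zero:
  assumes "vector_space scale"
  shows "poly_op scale 0 f b = 0"
proof -
  interpret vector_space scale by fact
  show ?thesis by (simp add: poly_op_def)
qed

lemma poly_op_sum:
  assumes "vector_space scale"
  shows "poly_op scale (\<Sum>k\<in>S. g k) f b = (\<Sum>k\<in>S. poly_op scale (g k) f b)"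
  by (induction S rule: infinite_finite_induct) (simp_all add: poly_op_zero[OF assms] poly_op_add[OF assms])

lemma poly_op_monom:
  assumes "vector_space scale"
  shows "poly_op scale (monom c k) f b = scale c ((f ^^ k) b)"
proof -
  interpret vector_space scale by fact
  have "poly_op scale (monom c k) f b = (\<Sum>i\<le>k. scale (coeff (monom c k) i) ((f ^^ i) b))"
    by (rule poly_op_bound[OF assms]) (simp add: degree_monom_le)
  also have "\<dots> = (\<Sum>i\<le>k. if i = k then scale c ((f ^^ i) b) else 0)"
    by (rule sum.cong) (auto simp: coeff_monom)
  also have "\<dots> = scale c ((f ^^ k) b)" by simp
  finally show ?thesis .
qed

lemma charpoly_div:
  assumes "1 \<le> n"
  shows "char_poly_cyc n \<alpha> div [:0, 1:] = monom 1 (n-1) - (\<Sum>k=2..n. monom (\<alpha> k) (k - 2))"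
proof -
  have x: "[:0, 1:] = monom (1::'a) 1" by (simp add: monom_Suc)
  have h: "\<And>x::nat. 2 \<le> x \<Longrightarrow> Suc (x - 2) = x - Suc 0" by arith
  have "char_poly_cyc n \<alpha> = (monom 1 (n-1) - (\<Sum>k=2..n. monom (\<alpha> k) (k - 2))) * [:0, 1:]"
    unfolding char_poly_cyc_def x
    using assms by (auto simp add: left_diff_distrib sum_distrib_right mult_monom h intro!: sum.cong)
  then show ?thesis by (simp del: mult_pCons_right pCons_0_0 add: nonzero_mult_div_cancel_right)
qed

lemma lpow_1: "lpow m a 1 = a" by (simp add: lpow_def)
lemma lpow_Suc0[simp]: "lpow m a (Suc 0) = a" by (simp add: lpow_def)
lemma lpow_Suc_fun: "lpow m a (Suc i) = (m a ^^ i) a" by (simp add: lpow_def)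
lemma lpow_Suc: "1 \<le> k \<Longrightarrow> lpow m a (Suc k) = m a (lpow m a k)"
  by (cases k) (auto simp: lpow_def)
lemma lpow_funpow: "1 \<le> k \<Longrightarrow> (m a ^^ j) (lpow m a k) = lpow m a (k + j)"
  by (induction j) (auto simp: lpow_Suc)

theorem mainTheorem14:
  fixes scale :: "'a::field \<Rightarrow> 'v::ab_group_add \<Rightarrow> 'v"
    and m :: "'v \<Rightarrow> 'v \<Rightarrow> 'v"
    and a :: 'v and n :: nat and \<alpha> :: "nat \<Rightarrow> 'a"
  assumes "1 \<le> n"
    and "leibniz_algebra scale m"
    and "generated_by scale m a"
    and "inj_on (lpow m a) {1..n}"
    and "\<not> module.dependent scale (lpow m a ` {1..n})"
    and "module.span scale (lpow m a ` {1..n}) = UNIV"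
    and "m a (lpow m a n) = (\<Sum>k=2..n. scale (\<alpha> k) (lpow m a k))"
  shows "\<forall>I. maximal_ideal scale m I \<longleftrightarrow>
           I = {b. poly_op scale (char_poly_cyc n \<alpha> div [:0, 1:]) (m a) b = 0}"
proof -
  have vsp: "vector_space scale" using assms(2) unfolding leibniz_algebra_def by blast
  interpret vs: vector_space scale by (rule vsp)
  define L where "L = m a"
  have leib: "\<And>x y z. m x (m y z) = m (m x y) z + m y (m x z)"
    using assms(2) unfolding leibniz_algebra_def by blast
  have hm: "\<And>x. module_hom scale scale (m x)"
    using assms(2) unfolding leibniz_algebra_def module_hom_iff_linear by blast
  have hm2: "\<And>y. module_hom scale scale (\<lambda>x. m x y)"
    using assms(2) unfolding leibniz_algebra_def module_hom_iff_linear by blast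
  have hL: "module_hom scale scale L" unfolding L_def by (rule hm)
  have hpow: "module_hom scale scale (L ^^ j)" for j
  proof (induction j)
    case 0 then show ?case by (simp add: module_hom_iff vs.module_axioms)
  next
    case (Suc j) then show ?case using module_hom_compose[OF Suc hL] by (simp only: funpow.simps)
  qed
  have m0: "\<And>x. m x 0 = 0" using hm module_hom.zero by blast
  have m0': "\<And>y. m 0 y = 0" using module_hom.zero[OF hm2] by simp
  have madd: "\<And>x y z. m (x + y) z = m x z + m y z" using module_hom.add[OF hm2] by simp
  have msc: "\<And>c x z. m (scale c x) z = scale c (m x z)" using module_hom.scale[OF hm2] by simp
  define T where "T = (\<lambda>b. (L^^(n-1)) b - (\<Sum>k=2..n. scale (\<alpha> k) ((L^^(k-2)) b)))"
  have Tpoly: "poly_op scale (char_poly_cyc n \<alpha> div [:0,1:]) (m a) b = T b" for b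
    unfolding charpoly_div[OF assms(1)] T_def L_def
    by (simp add: poly_op_diff[OF vsp] poly_op_sum[OF vsp] poly_op_monom[OF vsp])
  have hT: "module_hom scale scale T"
    unfolding module_hom_iff
  proof (intro conjI allI)
    show "module scale" by (rule vs.module_axioms)
    show "module scale" by (rule vs.module_axioms)
    fix x y show "T (x + y) = T x + T y"
      unfolding T_def by (simp add: module_hom.add[OF hpow] vs.scale_right_distrib sum.distrib algebra_simps)
  next
    fix c x show "T (scale c x) = scale c (T x)"
      unfolding T_def by (simp add: module_hom.scale[OF hpow] vs.scale_right_diff_distrib vs.scale_sum_right mult.commute)
  qed
  have span: "\<And>x. x \<in> vs.span (lpow m a ` {1..n})" using assms(6) by simp
  have Kpow: "\<forall>z. m (lpow m a (Suc (Suc k))) z = 0" for k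
  proof (induction k)
    case 0
    show ?case
    proof
      fix z show "m (lpow m a (Suc (Suc 0))) z = 0"
        using leib[of a a z] by (simp add: lpow_Suc lpow_1)
    qed
  next
    case (Suc k)
    show ?case
    proof
      fix z
      have "m a (m (lpow m a (Suc (Suc k))) z) = m (m a (lpow m a (Suc (Suc k)))) z + m (lpow m a (Suc (Suc k))) (m a z)"
        by (rule leib)
      then show "m (lpow m a (Suc (Suc (Suc k)))) z = 0"
        using Suc by (simp add: lpow_Suc m0)
    qed
  qed
  have Lzero: "m (L y) z = 0" for y z
  proof -
    have "y \<in> vs.span (lpow m a ` {1..n})" by (rule span)
    then have "\<forall>z. m (L y) z = 0"
    proof (induction rule: vs.span_induct)
      case base
      show ?case
      proof (rule vs.subspaceI)
        show "0 \<in> {y. \<forall>z. m (L y) z = 0}" by (simp add: module_hom.zero[OF hL] m0')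
        show "x + y \<in> {y. \<forall>z. m (L y) z = 0}" if "x \<in> {y. \<forall>z. m (L y) z = 0}" "y \<in> {y. \<forall>z. m (L y) z = 0}" for x y
          using that by (simp add: module_hom.add[OF hL] madd)
        show "scale c x \<in> {y. \<forall>z. m (L y) z = 0}" if "x \<in> {y. \<forall>z. m (L y) z = 0}" for c x
          using that by (simp add: module_hom.scale[OF hL] msc)
      qed
    next
      case (step x)
      then obtain k where k: "1 \<le> k" "x = lpow m a k" by auto
      then have "L x = lpow m a (Suc (Suc (k - 1)))" by (simp add: L_def lpow_Suc)
      then show ?case using Kpow by simp
    qed
    then show ?thesis by simp
  qed
  have decomp: "\<exists>c w. x = scale c a + L w" for x
  proof -
    let ?S = "{x. \<exists>c w. x = scale c a + L w}"
    have "vs.span (lpow m a ` {1..n}) \<subseteq> ?S"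
    proof (rule vs.span_minimal)
      show "lpow m a ` {1..n} \<subseteq> ?S"
      proof
        fix x assume "x \<in> lpow m a ` {1..n}"
        then obtain k where k: "1 \<le> k" "x = lpow m a k" by auto
        show "x \<in> ?S"
        proof (cases "k = 1")
          case True
          then have "x = scale 1 a + L 0" using k by (simp add: lpow_1 module_hom.zero[OF hL])
          then show ?thesis by blast
        next
          case False
          then have "x = L (lpow m a (k - 1))" using k lpow_Suc[of "k-1" m a] by (simp add: L_def)
          then have "x = scale 0 a + L (lpow m a (k - 1))" by simp
          then show ?thesis by blast
        qed
      qed
      show "vs.subspace ?S"
      proof (rule vs.subspaceI)
        show "0 \<in> ?S" by (auto simp: module_hom.zero[OF hL] intro!: exI[of _ 0])
        show "x + y \<in> ?S" if "x \<in> ?S" "y \<in> ?S" for x y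
        proof -
          from that obtain c1 w1 c2 w2 where "x = scale c1 a + L w1" "y = scale c2 a + L w2" by auto
          then show ?thesis
            by (auto simp: module_hom.add[OF hL] vs.scale_left_distrib algebra_simps intro!: exI[of _ "c1 + c2"] exI[of _ "w1 + w2"])
        qed
        show "scale c x \<in> ?S" if "x \<in> ?S" for c x
        proof -
          from that obtain c1 w1 where "x = scale c1 a + L w1" by auto
          then show ?thesis
            by (auto simp: module_hom.scale[OF hL] vs.scale_right_distrib intro!: exI[of _ "c * c1"] exI[of _ "scale c w1"])
        qed
      qed
    qed
    then show ?thesis using span[of x] by blast
  qed
  have mv: "m (scale c a + L w) y = scale c (L y)" for c w y
    using Lzero[of w y] by (simp add: madd msc L_def)
  have prodW: "m x z \<in> range L" for x z
  proof -
    obtain c w where "x = scale c a + L w" using decomp by blast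
    then have "m x z = L (scale c z)" by (simp add: mv module_hom.scale[OF hL])
    then show ?thesis by simp
  qed
  have Lf: "\<And>k j. 1 \<le> k \<Longrightarrow> (L^^j) (lpow m a k) = lpow m a (k+j)"
    unfolding L_def by (rule lpow_funpow)
  have TL: "T (L y) = 0" for y
  proof -
    have "y \<in> vs.span (lpow m a ` {1..n})" by (rule span)
    then show ?thesis
    proof (induction rule: vs.span_induct)
      case base
      show ?case
      proof (rule vs.subspaceI)
        show "0 \<in> {y. T (L y) = 0}" by (simp add: module_hom.zero[OF hL] module_hom.zero[OF hT])
        show "x + y \<in> {y. T (L y) = 0}" if "x \<in> {y. T (L y) = 0}" "y \<in> {y. T (L y) = 0}" for x y
          using that by (simp add: module_hom.add[OF hL] module_hom.add[OF hT])
        show "scale c x \<in> {y. T (L y) = 0}" if "x \<in> {y. T (L y) = 0}" for c x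
          using that by (simp add: module_hom.scale[OF hL] module_hom.scale[OF hT])
      qed
    next
      case (step x)
      then obtain k where k: "1 \<le> k" "x = lpow m a k" by auto
      have inner: "lpow m a (Suc n) - (\<Sum>j=2..n. scale (\<alpha> j) (lpow m a j)) = 0"
        using assms(7) assms(1) by (simp add: lpow_Suc)
      have "0 = (L^^(k-1)) (lpow m a (Suc n) - (\<Sum>j=2..n. scale (\<alpha> j) (lpow m a j)))"
        by (simp add: inner module_hom.zero[OF hpow])
      also have "\<dots> = lpow m a (Suc n + (k-1)) - (\<Sum>j=2..n. scale (\<alpha> j) (lpow m a (j + (k-1))))"
        using Lf by (simp add: module_hom.diff[OF hpow] module_hom.sum[OF hpow] module_hom.scale[OF hpow])
      also have "\<dots> = T (L x)"
        unfolding T_def L_def using k assms(1)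
        by (auto simp: lpow_Suc[symmetric] lpow_funpow intro!: sum.cong arg_cong2[where f="(-)"])
           (rule arg_cong[where f="lpow m a"], arith)+
      finally show ?case by simp
    qed
  qed
  have Ta: "T a \<noteq> 0"
  proof
    assume "T a = 0"
    then have eq: "lpow m a n = (\<Sum>j=2..n. scale (\<alpha> j) (lpow m a (j-1)))"
    proof -
      have La: "\<And>i. (L^^i) a = lpow m a (Suc i)" by (simp add: L_def lpow_Suc_fun)
      have "lpow m a n = lpow m a (Suc (n-1))" using assms(1) by simp
      also have "\<dots> = (\<Sum>k=2..n. scale (\<alpha> k) (lpow m a (Suc (k-2))))"
        using \<open>T a = 0\<close> unfolding T_def La by simp
      also have "\<dots> = (\<Sum>j=2..n. scale (\<alpha> j) (lpow m a (j-1)))"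
        by (rule sum.cong) (auto simp: Suc_diff_Suc numeral_2_eq_2)
      finally show ?thesis .
    qed
    let ?B = "lpow m a ` {1..n}"
    have "lpow m a (j-1) \<in> ?B - {lpow m a n}" if "j \<in> {2..n}" for j
    proof -
      have "j - 1 \<in> {1..n}" "j - 1 \<noteq> n" using that by auto
      moreover have "n \<in> {1..n}" using assms(1) by auto
      ultimately show ?thesis using assms(4) by (auto dest: inj_onD)
    qed
    then have "lpow m a n \<in> vs.span (?B - {lpow m a n})"
      unfolding eq by (intro vs.span_sum vs.span_scale vs.span_base) auto
    moreover have "lpow m a n \<in> ?B" using assms(1) by auto
    ultimately have "vs.dependent ?B" unfolding vs.dependent_def by blast
    then show False using assms(5) by simp
  qed
  have kerT: "T b = 0 \<longleftrightarrow> b \<in> range L" for b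
  proof
    assume "T b = 0"
    obtain c w where cw: "b = scale c a + L w" using decomp by blast
    then have "T b = scale c (T a)" by (simp add: module_hom.add[OF hT] module_hom.scale[OF hT] TL)
    with \<open>T b = 0\<close> Ta have "c = 0" by simp
    then show "b \<in> range L" using cw by simp
  next
    assume "b \<in> range L" then show "T b = 0" using TL by auto
  qed
  have aW: "a \<notin> range L" using kerT Ta by blast
  have subW: "vs.subspace (range L)" using module_hom.subspace_image[OF hL vs.subspace_UNIV] .
  have idW: "alg_ideal scale m (range L)"
    unfolding alg_ideal_def using subW prodW by blast
  have proper: "I \<subseteq> range L" if I: "alg_ideal scale m I" "I \<noteq> UNIV" for I
  proof (rule ccontr)
    assume "\<not> I \<subseteq> range L"
    then obtain v where v: "v \<in> I" "v \<notin> range L" by blast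
    obtain c w where cw: "v = scale c a + L w" using decomp by blast
    have sI: "vs.subspace I" using I unfolding alg_ideal_def by blast
    have c: "c \<noteq> 0" using v cw by auto
    have LI: "L y \<in> I" for y
    proof -
      have "m v y \<in> I" using I v unfolding alg_ideal_def by blast
      then have "scale c (L y) \<in> I" using cw mv by simp
      then have "scale (inverse c) (scale c (L y)) \<in> I" by (rule vs.subspace_scale[OF sI])
      then show ?thesis using c by simp
    qed
    have "v - L w \<in> I" using vs.subspace_diff[OF sI v(1) LI] .
    then have "scale c a \<in> I" using cw by simp
    then have "scale (inverse c) (scale c a) \<in> I" by (rule vs.subspace_scale[OF sI])
    then have aI: "a \<in> I" using c by simp
    have "x \<in> I" for x
    proof -
      obtain c' w' where "x = scale c' a + L w'" using decomp by blast
      then show ?thesis using vs.subspace_add[OF sI vs.subspace_scale[OF sI aI] LI] by simp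
    qed
    then show False using I(2) by blast
  qed
  have setEq: "{b. poly_op scale (char_poly_cyc n \<alpha> div [:0, 1:]) (m a) b = 0} = range L"
    using Tpoly kerT by auto
  show ?thesis
    unfolding setEq
  proof (intro allI iffI)
    fix I assume "maximal_ideal scale m I"
    then have I: "alg_ideal scale m I" "I \<noteq> UNIV"
      and mx: "\<And>J. alg_ideal scale m J \<Longrightarrow> I \<subseteq> J \<Longrightarrow> J \<noteq> UNIV \<Longrightarrow> J = I"
      unfolding maximal_ideal_def by blast+
    show "I = range L" using mx[OF idW proper[OF I]] aW by auto
  next
    fix I assume "I = range L"
    then show "maximal_ideal scale m I"
      unfolding maximal_ideal_def using idW aW proper by blast
  qed
qed

end
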